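(* Let $p_d:\mathbb R^n\to\mathbb R$ be a homogeneous polynomial of degree $d\ge2$ consisting only of non-separable monomials (i.e., every monomial appearing in $p_d$ with nonzero coefficient involves at least two distinct variables). Then $p_d$ is not convex. *)

theory Defs
  imports "HOL-Analysis.Analysis"
begin

text \<open>A real polynomial in the variables indexed by the finite type 'n is represented by
  its coefficient function c on exponent vectors alpha :: 'n => nat (finitely supported).\<close>

definition mpoly_support :: "(('n::finite \<Rightarrow> nat) \<Rightarrow> real) \<Rightarrow> ('n \<Rightarrow> nat) set" where
  "mpoly_support c = {\<alpha>. c \<alpha> \<noteq> 0}"

definition monomial_eval :: "('n::finite \<Rightarrow> nat) \<Rightarrow> real ^ 'n \<Rightarrow> real" where
  "monomial_eval \<alpha> x = (\<Prod>i\<in>UNIV. (x $ i) ^ (\<alpha> i))"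

definition mpoly_eval :: "(('n::finite \<Rightarrow> nat) \<Rightarrow> real) \<Rightarrow> real ^ 'n \<Rightarrow> real" where
  "mpoly_eval c x = (\<Sum>\<alpha>\<in>mpoly_support c. c \<alpha> * monomial_eval \<alpha> x)"

definition monomial_degree :: "('n::finite \<Rightarrow> nat) \<Rightarrow> nat" where
  "monomial_degree \<alpha> = (\<Sum>i\<in>UNIV. \<alpha> i)"

definition monomial_vars :: "('n::finite \<Rightarrow> nat) \<Rightarrow> 'n set" where
  "monomial_vars \<alpha> = {i. \<alpha> i \<noteq> 0}"

definition homogeneous_of_degree :: "(('n::finite \<Rightarrow> nat) \<Rightarrow> real) \<Rightarrow> nat \<Rightarrow> bool" where
  "homogeneous_of_degree c d \<longleftrightarrow> (\<forall>\<alpha>\<in>mpoly_support c. monomial_degree \<alpha> = d)"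

definition non_separable_monomial :: "('n::finite \<Rightarrow> nat) \<Rightarrow> bool" where
  "non_separable_monomial \<alpha> \<longleftrightarrow> card (monomial_vars \<alpha>) \<ge> 2"

end

theory Submission
  imports Defs "HOL-Computational_Algebra.Polynomial"
begin

lemma univ_zero:
  fixes a :: "nat \<Rightarrow> real"
  assumes "finite K" "\<And>t. (\<Sum>k\<in>K. a k * t ^ k) = 0" "k \<in> K"
  shows "a k = 0"
proof -
  define p where "p = (\<Sum>j\<in>K. monom (a j) j)"
  have "poly p t = 0" for t
    using assms(2)[of t] by (simp add: p_def poly_sum poly_monom)
  then have "poly p = poly 0" by auto
  then have "p = 0" by (simp add: poly_eq_poly_eq_iff)
  then have "coeff p k = 0" by simp
  moreover have "coeff p k = a k"
    unfolding p_def coeff_sum coeff_monom using assms(1,3)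
    by (simp add: sum.delta)
  ultimately show ?thesis by simp
qed

lemma mpoly_zero_aux:
  fixes V :: "'n set"
  assumes "finite V"
  shows "\<forall>S (c :: ('n \<Rightarrow> nat) \<Rightarrow> real). finite S \<longrightarrow> (\<forall>\<alpha>\<in>S. \<forall>i. i \<notin> V \<longrightarrow> \<alpha> i = 0) \<longrightarrow>
    (\<forall>x. (\<Sum>\<alpha>\<in>S. c \<alpha> * (\<Prod>i\<in>V. x i ^ \<alpha> i)) = 0) \<longrightarrow> (\<forall>\<alpha>\<in>S. c \<alpha> = 0)"
  using assms
proof (induction V rule: finite_induct)
  case empty
  show ?case
  proof (intro allI impI ballI)
    fix S and c :: "('n \<Rightarrow> nat) \<Rightarrow> real" and \<alpha>
    assume S: "finite S" "\<forall>\<alpha>\<in>S. \<forall>i. i \<notin> {} \<longrightarrow> \<alpha> i = 0"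
      "\<forall>x. (\<Sum>\<alpha>\<in>S. c \<alpha> * (\<Prod>i\<in>{}. x i ^ \<alpha> i)) = 0" and a: "\<alpha> \<in> S"
    have "S \<subseteq> {\<lambda>_. 0}" using S(2) by auto
    with a have "S = {\<lambda>_. 0}" "\<alpha> = (\<lambda>_. 0)" by auto
    with S(3) show "c \<alpha> = 0" by simp
  qed
next
  case (insert v V)
  show ?case
  proof (intro allI impI ballI)
    fix S and c :: "('n \<Rightarrow> nat) \<Rightarrow> real" and \<alpha>
    assume S: "finite S" "\<forall>\<alpha>\<in>S. \<forall>i. i \<notin> insert v V \<longrightarrow> \<alpha> i = 0"
      "\<forall>x. (\<Sum>\<alpha>\<in>S. c \<alpha> * (\<Prod>i\<in>insert v V. x i ^ \<alpha> i)) = 0" and a: "\<alpha> \<in> S"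
    define K where "K = (\<lambda>\<beta>. \<beta> v) ` S"
    define g where "g k x = (\<Sum>\<beta>\<in>{\<beta>\<in>S. \<beta> v = k}. c \<beta> * (\<Prod>i\<in>V. x i ^ \<beta> i))" for k x
    have fK: "finite K" using S(1) K_def by simp
    have decomp: "(\<Sum>\<beta>\<in>S. c \<beta> * (\<Prod>i\<in>insert v V. x i ^ \<beta> i)) = (\<Sum>k\<in>K. g k x * x v ^ k)" for x
    proof -
      have "(\<Sum>\<beta>\<in>S. c \<beta> * (\<Prod>i\<in>insert v V. x i ^ \<beta> i))
          = (\<Sum>k\<in>K. \<Sum>\<beta>\<in>{\<beta>\<in>S. \<beta> v = k}. c \<beta> * (\<Prod>i\<in>insert v V. x i ^ \<beta> i))"
        unfolding K_def using S(1) by (rule sum.image_gen)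
      also have "\<dots> = (\<Sum>k\<in>K. g k x * x v ^ k)"
        unfolding g_def sum_distrib_right
        by (intro sum.cong refl) (simp add: insert.hyps mult.commute mult.left_commute)
      finally show ?thesis .
    qed
    have gz: "g k x = 0" if "k \<in> K" for k x
    proof -
      have "(\<Sum>k\<in>K. g k (x(v := t)) * t ^ k) = 0" for t
        using S(3) decomp[of "x(v := t)"] by simp
      moreover have "g k (x(v := t)) = g k x" for k t
        unfolding g_def using insert.hyps by (intro sum.cong refl) (auto intro!: prod.cong)
      ultimately have "(\<Sum>k\<in>K. g k x * t ^ k) = 0" for t by simp
      then show ?thesis using univ_zero[OF fK _ that, of "\<lambda>k. g k x"] by blast
    qed
    define k where "k = \<alpha> v"
    have kK: "k \<in> K" using a k_def K_def by auto
    define S' where "S' = (\<lambda>\<beta>. \<beta>(v := 0)) ` {\<beta>\<in>S. \<beta> v = k}"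
    define c' where "c' \<gamma> = c (\<gamma>(v := k))" for \<gamma>
    have inj: "inj_on (\<lambda>\<beta>. \<beta>(v := 0)) {\<beta>\<in>S. \<beta> v = k}"
    proof (rule inj_onI)
      fix \<beta> \<gamma> assume "\<beta> \<in> {\<beta>\<in>S. \<beta> v = k}" "\<gamma> \<in> {\<beta>\<in>S. \<beta> v = k}" "\<beta>(v := 0) = \<gamma>(v := 0)"
      note h = this
      show "\<beta> = \<gamma>"
      proof
        fix i
        have e: "(\<beta>(v := 0)) i = (\<gamma>(v := 0)) i" using h(3) by simp
        show "\<beta> i = \<gamma> i"
        proof (cases "i = v")
          case True then show ?thesis using h(1,2) by simp
        next
          case False then show ?thesis using e by simp
        qed
      qed
    qed
    have "(\<Sum>\<gamma>\<in>S'. c' \<gamma> * (\<Prod>i\<in>V. x i ^ \<gamma> i)) = 0" for x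
    proof -
      have "(\<Sum>\<gamma>\<in>S'. c' \<gamma> * (\<Prod>i\<in>V. x i ^ \<gamma> i)) = g k x"
        unfolding S'_def g_def sum.reindex[OF inj] o_def c'_def
      proof (intro sum.cong refl)
        fix \<beta> assume b: "\<beta> \<in> {\<beta>\<in>S. \<beta> v = k}"
        have "(\<beta>(v := 0))(v := k) = \<beta>" using b by (auto simp: fun_eq_iff)
        moreover have "(\<Prod>i\<in>V. x i ^ (\<beta>(v := 0)) i) = (\<Prod>i\<in>V. x i ^ \<beta> i)"
          using insert.hyps by (intro prod.cong refl) auto
        ultimately show "c ((\<beta>(v := 0))(v := k)) * (\<Prod>i\<in>V. x i ^ (\<beta>(v := 0)) i) = c \<beta> * (\<Prod>i\<in>V. x i ^ \<beta> i)"
          by simp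
      qed
      then show ?thesis using gz[OF kK] by simp
    qed
    moreover have "finite S'" using S(1) S'_def by simp
    moreover have "\<forall>\<gamma>\<in>S'. \<forall>i. i \<notin> V \<longrightarrow> \<gamma> i = 0" using S(2) S'_def by auto
    ultimately have "\<forall>\<gamma>\<in>S'. c' \<gamma> = 0" using insert.IH[rule_format, of S' c'] by blast
    moreover have "\<alpha>(v := 0) \<in> S'" using a k_def S'_def by auto
    ultimately have "c' (\<alpha>(v := 0)) = 0" by blast
    then show "c \<alpha> = 0" by (simp add: c'_def k_def)
  qed
qed

theorem lemma3:
  fixes c :: "('n::finite \<Rightarrow> nat) \<Rightarrow> real" and d :: nat
  assumes "finite (mpoly_support c)"
    and "mpoly_support c \<noteq> {}"
    and "d \<ge> 2"
    and "homogeneous_of_degree c d"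
    and "\<forall>\<alpha>\<in>mpoly_support c. non_separable_monomial \<alpha>"
  shows "\<not> convex_on UNIV (mpoly_eval c)"
proof
  define p where "p = mpoly_eval c"
  assume cv: "convex_on UNIV (mpoly_eval c)"
  hence cv: "convex_on UNIV p" by (simp add: p_def)
  have hom: "p (t *\<^sub>R x) = t ^ d * p x" for t x
  proof -
    have "monomial_eval \<alpha> (t *\<^sub>R x) = t ^ d * monomial_eval \<alpha> x" if "\<alpha> \<in> mpoly_support c" for \<alpha>
    proof -
      have "monomial_eval \<alpha> (t *\<^sub>R x) = (\<Prod>i\<in>UNIV. t ^ \<alpha> i * (x $ i) ^ \<alpha> i)"
        unfolding monomial_eval_def by (simp add: power_mult_distrib)
      also have "\<dots> = t ^ (\<Sum>i\<in>UNIV. \<alpha> i) * monomial_eval \<alpha> x"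
        unfolding monomial_eval_def prod.distrib power_sum by simp
      also have "(\<Sum>i\<in>UNIV. \<alpha> i) = d" using assms(4) that
        unfolding homogeneous_of_degree_def monomial_degree_def by blast
      finally show ?thesis .
    qed
    then show ?thesis unfolding p_def mpoly_eval_def sum_distrib_left
      by (intro sum.cong refl) simp
  qed
  have ax: "p (\<chi> j. if j = i then s else 0) = 0" for i s
  proof -
    have "monomial_eval \<alpha> (\<chi> j. if j = i then s else 0) = 0" if "\<alpha> \<in> mpoly_support c" for \<alpha>
    proof -
      have "card (monomial_vars \<alpha>) \<ge> 2" using assms(5) that non_separable_monomial_def by blast
      moreover have "card (monomial_vars \<alpha>) \<le> 1" if "monomial_vars \<alpha> \<subseteq> {i}"
        using card_mono[OF _ that] by simp
      ultimately have "\<not> monomial_vars \<alpha> \<subseteq> {i}" by linarith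
      then obtain j where "j \<in> monomial_vars \<alpha>" "j \<noteq> i" by blast
      hence "\<alpha> j \<noteq> 0" "j \<noteq> i" by (auto simp: monomial_vars_def)
      hence "((\<chi> j. if j = i then s else 0) $ j) ^ \<alpha> j = 0" by simp
      hence "\<exists>j\<in>UNIV. ((\<chi> j. if j = i then s else 0) $ j) ^ \<alpha> j = 0" by blast
      thus ?thesis unfolding monomial_eval_def
        by (rule prod_zero[rotated]) simp
    qed
    then show ?thesis unfolding p_def mpoly_eval_def by simp
  qed
  have le: "p x \<le> 0" for x
  proof -
    define n where "n = real CARD('n)"
    have n0: "n > 0" unfolding n_def by simp
    define y where "y i = (\<chi> j. if j = i then n * x $ i else 0)" for i
    have "(\<Sum>i\<in>UNIV. (1 / n) *\<^sub>R y i) = x"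
    unfolding vec_eq_iff
    proof
      fix j
      have "(\<Sum>i\<in>UNIV. (1 / n) * (if j = i then n * x $ i else 0)) = (\<Sum>i\<in>UNIV. if j = i then x $ i else 0)"
        by (intro sum.cong refl) (use n0 in auto)
      also have "\<dots> = x $ j" by (simp add: sum.delta)
      finally show "(\<Sum>i\<in>UNIV. (1 / n) *\<^sub>R y i) $ j = x $ j" by (simp add: y_def)
    qed
    moreover have "p (\<Sum>i\<in>UNIV. (1 / n) *\<^sub>R y i) \<le> (\<Sum>i\<in>UNIV. (1 / n) * p (y i))"
    proof (rule convex_on_sum[OF _ _ cv])
      show "(\<Sum>i\<in>(UNIV::'n set). 1 / n) = 1" using n0 by (simp add: n_def)
    qed (use n0 in simp_all)
    moreover have "p (y i) = 0" for i unfolding y_def by (rule ax)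
    ultimately show ?thesis by simp
  qed
  have ge: "p x \<ge> 0" for x
  proof -
    have "p ((1 - 1/2) *\<^sub>R 0 + (1/2) *\<^sub>R (2 *\<^sub>R x)) \<le> (1 - 1/2) * p 0 + (1/2) * p (2 *\<^sub>R x)"
      by (rule convex_onD[OF cv]) auto
    moreover have "p 0 = 0" using hom[of 0 x] assms(3) by simp
    moreover have "p (2 *\<^sub>R x) = 2 ^ d * p x" by (rule hom)
    ultimately have "p x \<le> 2 ^ d / 2 * p x" by simp
    moreover have "(2::real) ^ d \<ge> 2 ^ 2" using assms(3) by (intro power_increasing) auto
    ultimately have "p x \<le> 2 * p x"
      using le[of x] mult_right_mono_neg[of 2 "2 ^ d / 2" "p x"] by simp
    thus ?thesis by simp
  qed
  have z: "(\<Sum>\<alpha>\<in>mpoly_support c. c \<alpha> * (\<Prod>i\<in>UNIV. x i ^ \<alpha> i)) = 0" for x :: "'n \<Rightarrow> real"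
  proof -
    have "p (vec_lambda x) = 0" using le ge by (simp add: order_antisym)
    thus ?thesis by (simp add: p_def mpoly_eval_def monomial_eval_def)
  qed
  have "\<forall>\<alpha>\<in>mpoly_support c. c \<alpha> = 0"
    using mpoly_zero_aux[OF finite_class.finite_UNIV, rule_format, of "mpoly_support c" c] assms(1) z by auto
  thus False using assms(2) by (auto simp: mpoly_support_def)
qed

end
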